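(* Let $\nu$ be a bounded continuous valuation on $\mathbb N_{\rm cof}$. Then there exist a discrete valuation $\alpha$ on $\mathbb N_{\rm cof}$ and a nonnegative real number $r$ such that $\nu=\alpha+r\beta$, where $\beta(U)=1$ for every non-empty open $U\subseteq\mathbb N_{\rm cof}$ and $\beta(\emptyset)=0$.
   Context: $\mathbb N_{\rm cof}$ is the set of natural numbers with the cofinite topology (open sets are $\emptyset$ and the complements of finite sets). A valuation on a space $X$ is a map $\nu:\mathcal OX\to[0,\infty]$ with $\nu(\emptyset)=0$, monotone and modular; continuous if it preserves directed suprema of opens; bounded if $\nu(X)<\infty$. A discrete valuation is one of the form $\sum_{i=1}^\infty r_i\delta_{x_i}$ ($r_i\in[0,\infty)$, $\delta_x$ the Dirac valuation at $x$), the supremum of its partial sums. *)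

theory Defs
  imports "HOL-Analysis.Analysis"
begin

definition cof_open :: "nat set \<Rightarrow> bool" where
  "cof_open U \<longleftrightarrow> U = {} \<or> finite (UNIV - U)"

text \<open>Valuations on N_cof, represented as functions on all sets of naturals;
  only their values on open sets matter.\<close>
definition cof_valuation :: "(nat set \<Rightarrow> ennreal) \<Rightarrow> bool" where
  "cof_valuation \<nu> \<longleftrightarrow>
     \<nu> {} = 0
   \<and> (\<forall>U V. cof_open U \<longrightarrow> cof_open V \<longrightarrow> U \<subseteq> V \<longrightarrow> \<nu> U \<le> \<nu> V)
   \<and> (\<forall>U V. cof_open U \<longrightarrow> cof_open V \<longrightarrow> \<nu> (U \<union> V) + \<nu> (U \<inter> V) = \<nu> U + \<nu> V)"

definition cof_directed :: "nat set set \<Rightarrow> bool" where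
  "cof_directed D \<longleftrightarrow> D \<noteq> {} \<and> (\<forall>U\<in>D. cof_open U)
     \<and> (\<forall>U\<in>D. \<forall>V\<in>D. \<exists>W\<in>D. U \<subseteq> W \<and> V \<subseteq> W)"

definition cof_continuous_valuation :: "(nat set \<Rightarrow> ennreal) \<Rightarrow> bool" where
  "cof_continuous_valuation \<nu> \<longleftrightarrow> cof_valuation \<nu>
     \<and> (\<forall>D. cof_directed D \<longrightarrow> \<nu> (\<Union>D) = (SUP U\<in>D. \<nu> U))"

definition cof_bounded :: "(nat set \<Rightarrow> ennreal) \<Rightarrow> bool" where
  "cof_bounded \<nu> \<longleftrightarrow> \<nu> UNIV < \<infinity>"

definition cof_discrete_valuation :: "(nat set \<Rightarrow> ennreal) \<Rightarrow> bool" where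
  "cof_discrete_valuation \<alpha> \<longleftrightarrow>
     (\<exists>(r::nat \<Rightarrow> real) (x::nat \<Rightarrow> nat). (\<forall>i. 0 \<le> r i) \<and>
        (\<forall>U. cof_open U \<longrightarrow> \<alpha> U = (\<Sum>i. ennreal (r i) * indicator U (x i))))"

definition cof_beta :: "nat set \<Rightarrow> ennreal" where
  "cof_beta U = (if U = {} then 0 else 1)"

end

theory Submission
  imports Defs
begin

theorem proposition3p2:
  fixes \<nu> :: "nat set \<Rightarrow> ennreal"
  assumes "cof_continuous_valuation \<nu>"
    and "cof_bounded \<nu>"
  shows "\<exists>\<alpha> (r::real). cof_discrete_valuation \<alpha> \<and> 0 \<le> r \<and>
           (\<forall>U. cof_open U \<longrightarrow> \<nu> U = \<alpha> U + ennreal r * cof_beta U)"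
proof -
  have val: "cof_valuation \<nu>" using assms(1) unfolding cof_continuous_valuation_def by simp
  have e0: "\<nu> {} = 0" using val unfolding cof_valuation_def by simp
  have mono: "\<And>U V. cof_open U \<Longrightarrow> cof_open V \<Longrightarrow> U \<subseteq> V \<Longrightarrow> \<nu> U \<le> \<nu> V"
    using val unfolding cof_valuation_def by blast
  have modu: "\<And>U V. cof_open U \<Longrightarrow> cof_open V \<Longrightarrow> \<nu> (U \<union> V) + \<nu> (U \<inter> V) = \<nu> U + \<nu> V"
    using val unfolding cof_valuation_def by blast
  have bnd: "\<nu> UNIV < \<infinity>" using assms(2) unfolding cof_bounded_def by simp
  have opF: "\<And>F. finite F \<Longrightarrow> cof_open (UNIV - F)" unfolding cof_open_def by (simp add: Diff_Diff_Int)
  have fin: "\<And>U. cof_open U \<Longrightarrow> \<nu> U < \<infinity>"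
  proof -
    fix U assume "cof_open U"
    have "\<nu> U \<le> \<nu> UNIV" using mono[OF \<open>cof_open U\<close> opF[of "{}"]] by simp
    then show "\<nu> U < \<infinity>" using bnd by (rule le_less_trans)
  qed
  define V where "V U = enn2real (\<nu> U)" for U
  have nuV: "\<And>U. cof_open U \<Longrightarrow> \<nu> U = ennreal (V U)"
    unfolding V_def using fin by (simp add: less_top)
  have V0: "\<And>U. V U \<ge> 0" unfolding V_def by simp
  define N where "N = V UNIV"
  define a where "a n = N - V (UNIV - {n})" for n
  have a0: "\<And>n. a n \<ge> 0"
  proof -
    fix n
    have "\<nu> (UNIV - {n}) \<le> \<nu> UNIV" using mono opF[of "{n}"] opF[of "{}"] by auto
    then have "ennreal (V (UNIV - {n})) \<le> ennreal (V UNIV)" using nuV[OF opF[of "{n}"]] nuV[OF opF[of "{}"]] by simp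
    then have "V (UNIV - {n}) \<le> V UNIV" using V0[of UNIV] by (simp add: ennreal_le_iff)
    then show "a n \<ge> 0" unfolding a_def N_def by simp
  qed
  have key: "\<And>F. finite F \<Longrightarrow> V (UNIV - F) = N - sum a F"
  proof -
    fix F :: "nat set" assume "finite F"
    then show "V (UNIV - F) = N - sum a F"
    proof (induction F rule: finite_induct)
      case empty then show ?case unfolding N_def by simp
    next
      case (insert m F)
      have u: "(UNIV - F) \<union> (UNIV - {m}) = UNIV" using insert by auto
      have i: "(UNIV - F) \<inter> (UNIV - {m}) = UNIV - insert m F" by auto
      have "\<nu> UNIV + \<nu> (UNIV - insert m F) = \<nu> (UNIV - F) + \<nu> (UNIV - {m})"
        using modu[OF opF[OF insert(1)] opF[of "{m}"]] u i by simp
      then have "ennreal (V UNIV) + ennreal (V (UNIV - insert m F)) = ennreal (V (UNIV - F)) + ennreal (V (UNIV - {m}))"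
        using nuV[OF opF[of "{}"]] nuV[OF opF[OF finite.insertI[OF insert(1)]]]
          nuV[OF opF[OF insert(1)]] nuV[OF opF[of "{m}"]] by simp
      then have "ennreal (V UNIV + V (UNIV - insert m F)) = ennreal (V (UNIV - F) + V (UNIV - {m}))"
        using V0 by (metis ennreal_plus)
      then have "V UNIV + V (UNIV - insert m F) = V (UNIV - F) + V (UNIV - {m})"
        by (subst (asm) ennreal_inj) (use V0 add_nonneg_nonneg in auto)
      then show ?case using insert unfolding a_def N_def by simp
    qed
  qed
  have psum: "\<And>n. sum a {..<n} \<le> N"
  proof -
    fix n
    have "V (UNIV - {..<n}) = N - sum a {..<n}" using key[of "{..<n}"] by simp
    then show "sum a {..<n} \<le> N" using V0[of "UNIV - {..<n}"] by linarith
  qed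
  have summ: "summable a" using summableI_nonneg_bounded[OF a0 psum] .
  define S where "S = suminf a"
  have SN: "S \<le> N" unfolding S_def using suminf_le_const[OF summ psum] .
  define r where "r = N - S"
  define \<alpha> where "\<alpha> U = (\<Sum>i. ennreal (a i) * indicator U i)" for U :: "nat set"
  have disc: "cof_discrete_valuation \<alpha>"
    unfolding cof_discrete_valuation_def
    by (rule exI[of _ a], rule exI[of _ id]) (simp add: a0 \<alpha>_def)
  have main: "\<nu> U = \<alpha> U + ennreal r * cof_beta U" if "cof_open U" for U
  proof (cases "U = {}")
    case True
    then show ?thesis by (simp add: e0 \<alpha>_def cof_beta_def)
  next
    case False
    define F where "F = UNIV - U"
    have F: "finite F" "U = UNIV - F" using that False unfolding cof_open_def F_def by auto
    have ne: "U \<noteq> {}" using False .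
    have b: "cof_beta U = 1" using ne unfolding cof_beta_def by simp
    have eq1: "\<And>i. ennreal (a i) * indicator U i = ennreal (a i * indicator U i)"
      by (simp add: indicator_def)
    have g0: "\<And>i. a i * indicator U i \<ge> 0" using a0 by (simp add: indicator_def)
    have sF: "summable (\<lambda>i. a i * indicator F i)"
      by (rule summable_finite[OF F(1)]) (simp add: indicator_def)
    have sFv: "(\<Sum>i. a i * indicator F i) = sum a F"
      by (subst suminf_finite[OF F(1)]) (auto simp: indicator_def)
    have split: "\<And>i. a i * indicator U i = a i - a i * indicator F i"
      using F by (simp add: indicator_def)
    have sU: "summable (\<lambda>i. a i * indicator U i)"
      unfolding split using summ sF by (rule summable_diff)
    have sUv: "(\<Sum>i. a i * indicator U i) = S - sum a F"
      unfolding split S_def using suminf_diff[OF summ sF] sFv by simp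
    have "\<alpha> U = ennreal (S - sum a F)"
      unfolding \<alpha>_def eq1 using suminf_ennreal2[OF g0 sU] sUv by simp
    moreover have "S - sum a F \<ge> 0" using sUv suminf_nonneg[OF sU g0] by simp
    moreover have "\<nu> U = ennreal (N - sum a F)" using nuV[OF that] key[OF F(1)] F(2) by simp
    ultimately show ?thesis using SN unfolding b r_def
      by (simp add: ennreal_plus[symmetric])
  qed
  show ?thesis
    by (rule exI[of _ \<alpha>], rule exI[of _ r]) (use disc SN main r_def in auto)
qed

end
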